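(* Let $\kappa \ge 1$ be an integer and let $J_m$ denote the nilpotent Jordan cell of size $m$ (the $m\times m$ matrix with ones on the superdiagonal and zeros elsewhere). Then both $J_\kappa \oplus J_\kappa \in \mathcal{B}(\mathbb{C}^{2\kappa})$ and $J_{\kappa+1} \oplus J_\kappa \in \mathcal{B}(\mathbb{C}^{2\kappa+1})$ can be written as $MN - NM$ with $M, N$ operators on the respective space satisfying $M^2 = 0 = N^2$. *)

theory Defs
  imports "Jordan_Normal_Form.Jordan_Normal_Form"
begin

end

theory Submission
  imports Defs
begin

lemma sum_single:
  assumes "finite S" "\<And>l. l \<in> S \<Longrightarrow> l \<noteq> c \<Longrightarrow> f l = 0"
  shows "sum f S = (if c \<in> S then f c else 0)"
proof (cases "c \<in> S")
  case True
  then have "sum f S = f c + sum f (S - {c})" using assms(1) by (simp add: sum.remove)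
  also have "sum f (S - {c}) = 0" using assms(2) by (intro sum.neutral) auto
  finally show ?thesis using True by simp
next
  case False
  then show ?thesis using assms by (intro trans[OF sum.neutral]) auto
qed

definition Mm :: "nat \<Rightarrow> nat \<Rightarrow> complex mat" where
  "Mm a k = mat (a+k) (a+k) (\<lambda>(i,j). if j = i + a \<and> i < k then (-1)^i else 0)"

definition Nm :: "nat \<Rightarrow> nat \<Rightarrow> complex mat" where
  "Nm a k = mat (a+k) (a+k) (\<lambda>(i,j). if i + 1 = j + a \<and> 1 \<le> j \<and> j < a then (-1)^(j+1) else 0)"

lemma diag_eq:
  "diag_block_mat [A, B :: complex mat] = four_block_mat A (0\<^sub>m (dim_row A) (dim_col B)) (0\<^sub>m (dim_row B) (dim_col A)) B"
proof -
  have "diag_block_mat [B] = B" by (rule eq_matI) auto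
  then show ?thesis by (simp add: Let_def)
qed

lemma diag_entry:
  assumes "i < a + k" "j < a + k"
  shows "diag_block_mat [jordan_block a (0::complex), jordan_block k 0] $$ (i,j)
      = (if Suc i = j \<and> j \<noteq> a then 1 else 0)"
  unfolding diag_eq using assms by (auto simp: jordan_block_def)

lemma diag_carrier:
  "diag_block_mat [jordan_block a (0::complex), jordan_block k 0] \<in> carrier_mat (a+k) (a+k)"
  unfolding diag_eq by (rule four_block_carrier_mat) auto

lemma MN_entry:
  assumes "k \<le> a" "a \<le> k + 1" "i < a + k" "j < a + k"
  shows "(Mm a k * Nm a k) $$ (i,j) = (if j = i + 1 \<and> j < a then 1 else 0)"
proof -
  have "(Mm a k * Nm a k) $$ (i,j) = (\<Sum>l\<in>{0..<a+k}. Mm a k $$ (i,l) * Nm a k $$ (l,j))"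
    using assms by (simp add: Mm_def Nm_def scalar_prod_def)
  also have "\<dots> = (if i + a \<in> {0..<a+k} then Mm a k $$ (i,i+a) * Nm a k $$ (i+a,j) else 0)"
    by (rule sum_single) (use assms in \<open>auto simp: Mm_def\<close>)
  also have "\<dots> = (if j = i + 1 \<and> j < a then 1 else 0)"
    using assms by (auto simp: Mm_def Nm_def power_add[symmetric] simp flip: power_add)
  finally show ?thesis .
qed

lemma NM_entry:
  assumes "k \<le> a" "a \<le> k + 1" "i < a + k" "j < a + k"
  shows "(Nm a k * Mm a k) $$ (i,j) = (if j = i + 1 \<and> a \<le> i then -1 else 0)"
proof -
  have "(Nm a k * Mm a k) $$ (i,j) = (\<Sum>l\<in>{0..<a+k}. Nm a k $$ (i,l) * Mm a k $$ (l,j))"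
    using assms by (simp add: Mm_def Nm_def scalar_prod_def)
  also have "\<dots> = (if i + 1 - a \<in> {0..<a+k} then Nm a k $$ (i,i+1-a) * Mm a k $$ (i+1-a,j) else 0)"
    by (rule sum_single) (use assms in \<open>auto simp: Nm_def\<close>)
  also have "\<dots> = (if j = i + 1 \<and> a \<le> i then -1 else 0)"
    using assms by (auto simp: Mm_def Nm_def simp flip: power_add)
  finally show ?thesis .
qed

lemma MM_zero:
  assumes "k \<le> a"
  shows "Mm a k * Mm a k = 0\<^sub>m (a+k) (a+k)"
proof (rule eq_matI)
  fix i j assume ij: "i < dim_row (0\<^sub>m (a+k) (a+k) :: complex mat)" "j < dim_col (0\<^sub>m (a+k) (a+k) :: complex mat)"
  have "(Mm a k * Mm a k) $$ (i,j) = (\<Sum>l\<in>{0..<a+k}. Mm a k $$ (i,l) * Mm a k $$ (l,j))"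
    using ij by (simp add: Mm_def scalar_prod_def)
  also have "\<dots> = 0"
    by (rule sum.neutral) (use ij assms in \<open>auto simp: Mm_def\<close>)
  finally show "(Mm a k * Mm a k) $$ (i,j) = 0\<^sub>m (a+k) (a+k) $$ (i,j)" using ij by simp
qed (auto simp: Mm_def)

lemma NN_zero:
  shows "Nm a k * Nm a k = 0\<^sub>m (a+k) (a+k)"
proof (rule eq_matI)
  fix i j assume ij: "i < dim_row (0\<^sub>m (a+k) (a+k) :: complex mat)" "j < dim_col (0\<^sub>m (a+k) (a+k) :: complex mat)"
  have "(Nm a k * Nm a k) $$ (i,j) = (\<Sum>l\<in>{0..<a+k}. Nm a k $$ (i,l) * Nm a k $$ (l,j))"
    using ij by (simp add: Nm_def scalar_prod_def)
  also have "\<dots> = 0"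
    by (rule sum.neutral) (use ij in \<open>auto simp: Nm_def\<close>)
  finally show "(Nm a k * Nm a k) $$ (i,j) = 0\<^sub>m (a+k) (a+k) $$ (i,j)" using ij by simp
qed (auto simp: Nm_def)

lemma dims[simp]:
  "dim_row (Mm a k) = a + k" "dim_col (Mm a k) = a + k"
  "dim_row (Nm a k) = a + k" "dim_col (Nm a k) = a + k"
  "Mm a k \<in> carrier_mat (a+k) (a+k)" "Nm a k \<in> carrier_mat (a+k) (a+k)"
  unfolding Mm_def Nm_def carrier_mat_def by simp_all

lemma main:
  assumes "k \<le> a" "a \<le> k + 1"
  shows "diag_block_mat [jordan_block a (0::complex), jordan_block k 0] = Mm a k * Nm a k - Nm a k * Mm a k"
proof (rule eq_matI)
  fix i j assume ij: "i < dim_row (Mm a k * Nm a k - Nm a k * Mm a k)" "j < dim_col (Mm a k * Nm a k - Nm a k * Mm a k)"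
  then have ij': "i < a + k" "j < a + k" by auto
  have "(Mm a k * Nm a k - Nm a k * Mm a k) $$ (i, j) = (Mm a k * Nm a k) $$ (i,j) - (Nm a k * Mm a k) $$ (i,j)"
    using ij' by (simp only: dims index_minus_mat index_mult_mat)
  also have "\<dots> = diag_block_mat [jordan_block a 0, jordan_block k 0] $$ (i, j)"
    unfolding MN_entry[OF assms ij'] NM_entry[OF assms ij'] diag_entry[OF ij'] by (simp, linarith)
  finally show "diag_block_mat [jordan_block a 0, jordan_block k 0] $$ (i, j) = (Mm a k * Nm a k - Nm a k * Mm a k) $$ (i, j)" by simp
next
  show "dim_row (diag_block_mat [jordan_block a (0::complex), jordan_block k 0]) = dim_row (Mm a k * Nm a k - Nm a k * Mm a k)"
    "dim_col (diag_block_mat [jordan_block a (0::complex), jordan_block k 0]) = dim_col (Mm a k * Nm a k - Nm a k * Mm a k)"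
    using diag_carrier[of a k] by (simp_all only: carrier_mat_def mem_Collect_eq index_minus_mat index_mult_mat dims)
qed

theorem proposition3p13:
  fixes \<kappa> :: nat
  assumes "\<kappa> \<ge> 1"
  shows "(\<exists>M N :: complex mat.
            M \<in> carrier_mat (2*\<kappa>) (2*\<kappa>) \<and> N \<in> carrier_mat (2*\<kappa>) (2*\<kappa>) \<and>
            M * M = 0\<^sub>m (2*\<kappa>) (2*\<kappa>) \<and> N * N = 0\<^sub>m (2*\<kappa>) (2*\<kappa>) \<and>
            diag_block_mat [jordan_block \<kappa> 0, jordan_block \<kappa> 0] = M * N - N * M)
       \<and> (\<exists>M N :: complex mat.
            M \<in> carrier_mat (2*\<kappa>+1) (2*\<kappa>+1) \<and> N \<in> carrier_mat (2*\<kappa>+1) (2*\<kappa>+1) \<and>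
            M * M = 0\<^sub>m (2*\<kappa>+1) (2*\<kappa>+1) \<and> N * N = 0\<^sub>m (2*\<kappa>+1) (2*\<kappa>+1) \<and>
            diag_block_mat [jordan_block (\<kappa>+1) 0, jordan_block \<kappa> 0] = M * N - N * M)"
proof
  have e1: "2*\<kappa> = \<kappa> + \<kappa>" by simp
  show "\<exists>M N :: complex mat.
            M \<in> carrier_mat (2*\<kappa>) (2*\<kappa>) \<and> N \<in> carrier_mat (2*\<kappa>) (2*\<kappa>) \<and>
            M * M = 0\<^sub>m (2*\<kappa>) (2*\<kappa>) \<and> N * N = 0\<^sub>m (2*\<kappa>) (2*\<kappa>) \<and>
            diag_block_mat [jordan_block \<kappa> 0, jordan_block \<kappa> 0] = M * N - N * M"
    unfolding e1
    by (rule exI[of _ "Mm \<kappa> \<kappa>"], rule exI[of _ "Nm \<kappa> \<kappa>"])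
       (intro conjI dims MM_zero NN_zero main, auto)
  have e2: "2*\<kappa>+1 = (\<kappa>+1) + \<kappa>" by simp
  show "\<exists>M N :: complex mat.
            M \<in> carrier_mat (2*\<kappa>+1) (2*\<kappa>+1) \<and> N \<in> carrier_mat (2*\<kappa>+1) (2*\<kappa>+1) \<and>
            M * M = 0\<^sub>m (2*\<kappa>+1) (2*\<kappa>+1) \<and> N * N = 0\<^sub>m (2*\<kappa>+1) (2*\<kappa>+1) \<and>
            diag_block_mat [jordan_block (\<kappa>+1) 0, jordan_block \<kappa> 0] = M * N - N * M"
    unfolding e2
    by (rule exI[of _ "Mm (\<kappa>+1) \<kappa>"], rule exI[of _ "Nm (\<kappa>+1) \<kappa>"])
       (intro conjI dims MM_zero NN_zero main, auto)
qed

end
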